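(* For any congruences $R$ and $S$ on the same quandle $X$, $c_X(R\vee S)=c_X(R)\vee c_X(S)$, where $\vee$ denotes the join in the lattice of congruences on $X$.
   Context: A quandle is a set $X$ with two binary operations $\lhd,\lhd^{-1}$ satisfying, for all $x,y,z\in X$: $x\lhd x = x = x\lhd^{-1}x$; $(x\lhd y)\lhd^{-1}y = x = (x\lhd^{-1}y)\lhd y$; $(x\lhd y)\lhd z = (x\lhd z)\lhd(y\lhd z)$ and $(x\lhd^{-1}y)\lhd^{-1}z = (x\lhd^{-1}z)\lhd^{-1}(y\lhd^{-1}z)$. Homomorphisms preserve both operations. A congruence on $X$ is an equivalence relation on $X$ that is a subquandle of $X\times X$. For $x\in X$, the orbit $[x]_X$ is the set of all elements $x\lhd^{\alpha_1}x_1\cdots\lhd^{\alpha_n}x_n$ ($n\ge 0$, $x_i\in X$, $\lhd^{\alpha_i}\in\{\lhd,\lhd^{-1}\}$, bracketed from the left). The effective closure of a congruence $R$ on $X$ (associated with the reflection of quandles onto trivial quandles) is $c_X(R)=\{(x,y)\in X\times X\mid [q(x)]_{X/R}=[q(y)]_{X/R}\}$ where $q\colon X\to X/R$ is the canonical quotient. *)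

theory Defs
  imports Main
begin

definition quandle :: "'a set \<Rightarrow> ('a \<Rightarrow> 'a \<Rightarrow> 'a) \<Rightarrow> ('a \<Rightarrow> 'a \<Rightarrow> 'a) \<Rightarrow> bool" where
  "quandle X f g \<longleftrightarrow>
     (\<forall>x\<in>X. \<forall>y\<in>X. f x y \<in> X \<and> g x y \<in> X) \<and>
     (\<forall>x\<in>X. f x x = x \<and> g x x = x) \<and>
     (\<forall>x\<in>X. \<forall>y\<in>X. g (f x y) y = x \<and> f (g x y) y = x) \<and>
     (\<forall>x\<in>X. \<forall>y\<in>X. \<forall>z\<in>X. f (f x y) z = f (f x z) (f y z) \<and>
                             g (g x y) z = g (g x z) (g y z))"

definition congruence :: "'a set \<Rightarrow> ('a \<Rightarrow> 'a \<Rightarrow> 'a) \<Rightarrow> ('a \<Rightarrow> 'a \<Rightarrow> 'a) \<Rightarrow> 'a rel \<Rightarrow> bool" where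
  "congruence X f g R \<longleftrightarrow> equiv X R \<and>
     (\<forall>x x' y y'. (x, x') \<in> R \<longrightarrow> (y, y') \<in> R \<longrightarrow>
        (f x y, f x' y') \<in> R \<and> (g x y, g x' y') \<in> R)"

definition quot_op :: "'a rel \<Rightarrow> ('a \<Rightarrow> 'a \<Rightarrow> 'a) \<Rightarrow> 'a set \<Rightarrow> 'a set \<Rightarrow> 'a set" where
  "quot_op R f A B = R `` {f (SOME a. a \<in> A) (SOME b. b \<in> B)}"

inductive_set orbit :: "'a set \<Rightarrow> ('a \<Rightarrow> 'a \<Rightarrow> 'a) \<Rightarrow> ('a \<Rightarrow> 'a \<Rightarrow> 'a) \<Rightarrow> 'a \<Rightarrow> 'a set"
  for X f g x where
  orbit_base: "x \<in> orbit X f g x"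
| orbit_f: "y \<in> orbit X f g x \<Longrightarrow> z \<in> X \<Longrightarrow> f y z \<in> orbit X f g x"
| orbit_g: "y \<in> orbit X f g x \<Longrightarrow> z \<in> X \<Longrightarrow> g y z \<in> orbit X f g x"

definition effective_closure :: "'a set \<Rightarrow> ('a \<Rightarrow> 'a \<Rightarrow> 'a) \<Rightarrow> ('a \<Rightarrow> 'a \<Rightarrow> 'a) \<Rightarrow> 'a rel \<Rightarrow> 'a rel" where
  "effective_closure X f g R = {(x, y). x \<in> X \<and> y \<in> X \<and>
     orbit (X // R) (quot_op R f) (quot_op R g) (R `` {x}) =
     orbit (X // R) (quot_op R f) (quot_op R g) (R `` {y})}"

definition cong_join :: "'a set \<Rightarrow> ('a \<Rightarrow> 'a \<Rightarrow> 'a) \<Rightarrow> ('a \<Rightarrow> 'a \<Rightarrow> 'a) \<Rightarrow> 'a rel \<Rightarrow> 'a rel \<Rightarrow> 'a rel" where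
  "cong_join X f g R S = \<Inter> {T. congruence X f g T \<and> R \<union> S \<subseteq> T}"

end

theory Submission
  imports Defs
begin

context
  fixes X f g
  assumes Q: "quandle X f g"
begin

lemma cl: "x \<in> X \<Longrightarrow> y \<in> X \<Longrightarrow> f x y \<in> X \<and> g x y \<in> X"
  using Q unfolding quandle_def by blast

lemma inv1: "x \<in> X \<Longrightarrow> y \<in> X \<Longrightarrow> g (f x y) y = x \<and> f (g x y) y = x"
  using Q unfolding quandle_def by blast

lemma orbit_sub: "x \<in> X \<Longrightarrow> orbit X f g x \<subseteq> X"
proof
  fix y assume "x \<in> X" "y \<in> orbit X f g x"
  from this(2,1) show "y \<in> X" by (induction rule: orbit.induct) (auto simp: cl)
qed

lemma orbit_trans: "w \<in> orbit X f g y \<Longrightarrow> y \<in> orbit X f g x \<Longrightarrow> w \<in> orbit X f g x"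
  by (induction rule: orbit.induct) (auto intro: orbit.intros)

lemma orbit_sym: "y \<in> orbit X f g x \<Longrightarrow> x \<in> X \<Longrightarrow> x \<in> orbit X f g y"
proof (induction rule: orbit.induct)
  case orbit_base show ?case by (rule orbit.orbit_base)
next
  case (orbit_f y z)
  have yX: "y \<in> X" using orbit_sub orbit_f by blast
  have "g (f y z) z \<in> orbit X f g (f y z)" using orbit_f by (auto intro: orbit.intros)
  then have "y \<in> orbit X f g (f y z)" using inv1[OF yX orbit_f(2)] by simp
  then show ?case using orbit_f orbit_trans by blast
next
  case (orbit_g y z)
  have yX: "y \<in> X" using orbit_sub orbit_g by blast
  have "f (g y z) z \<in> orbit X f g (g y z)" using orbit_g by (auto intro: orbit.intros)
  then have "y \<in> orbit X f g (g y z)" using inv1[OF yX orbit_g(2)] by simp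
  then show ?case using orbit_g orbit_trans by blast
qed

lemma orbit_f_in: "x \<in> X \<Longrightarrow> y \<in> X \<Longrightarrow> x \<in> orbit X f g (f x y)"
  using orbit_sym[of "f x y" x] by (auto intro: orbit.intros)

lemma orbit_g_in: "x \<in> X \<Longrightarrow> y \<in> X \<Longrightarrow> x \<in> orbit X f g (g x y)"
  using orbit_sym[of "g x y" x] by (auto intro: orbit.intros)

context
  fixes R
  assumes C: "congruence X f g R"
begin

lemma eqR: "equiv X R" using C unfolding congruence_def by blast

lemma compR: "(x, x') \<in> R \<Longrightarrow> (y, y') \<in> R \<Longrightarrow> (f x y, f x' y') \<in> R \<and> (g x y, g x' y') \<in> R"
  using C unfolding congruence_def by blast

lemma reflR: "z \<in> X \<Longrightarrow> (z, z) \<in> R"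
  using eqR unfolding equiv_def refl_on_def by blast

lemma RX: "(a, b) \<in> R \<Longrightarrow> a \<in> X \<and> b \<in> X"
  using eqR unfolding equiv_def refl_on_def by blast

lemma L: "v \<in> orbit X f g b \<Longrightarrow> (a, b) \<in> R \<Longrightarrow> \<exists>v'\<in>orbit X f g a. (v', v) \<in> R"
proof (induction rule: orbit.induct)
  case orbit_base then show ?case by (auto intro: orbit.intros)
next
  case (orbit_f y z)
  then obtain v' where "v' \<in> orbit X f g a" "(v', y) \<in> R" by blast
  then show ?case using compR[OF _ reflR[OF orbit_f(2)]] orbit_f by (auto intro: orbit.intros)
next
  case (orbit_g y z)
  then obtain v' where "v' \<in> orbit X f g a" "(v', y) \<in> R" by blast
  then show ?case using compR[OF _ reflR[OF orbit_g(2)]] orbit_g by (auto intro: orbit.intros)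
qed

lemma qop: "a \<in> X \<Longrightarrow> b \<in> X \<Longrightarrow> quot_op R f (R``{a}) (R``{b}) = R``{f a b}
   \<and> quot_op R g (R``{a}) (R``{b}) = R``{g a b}"
proof -
  assume a: "a \<in> X" and b: "b \<in> X"
  have "(SOME a'. a' \<in> R``{a}) \<in> R``{a}" using reflR[OF a] by (metis Image_singleton_iff someI)
  then have 1: "(a, SOME a'. a' \<in> R``{a}) \<in> R" by simp
  have "(SOME a'. a' \<in> R``{b}) \<in> R``{b}" using reflR[OF b] by (metis Image_singleton_iff someI)
  then have 2: "(b, SOME a'. a' \<in> R``{b}) \<in> R" by simp
  from compR[OF 1 2] show ?thesis unfolding quot_op_def
    using equiv_class_eq[OF eqR] by metis
qed

lemma orbit_quot: "x \<in> X \<Longrightarrow>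
  orbit (X // R) (quot_op R f) (quot_op R g) (R``{x}) = (\<lambda>w. R``{w}) ` orbit X f g x"
proof
  assume x: "x \<in> X"
  show "orbit (X // R) (quot_op R f) (quot_op R g) (R``{x}) \<subseteq> (\<lambda>w. R``{w}) ` orbit X f g x"
  proof
    fix A assume "A \<in> orbit (X // R) (quot_op R f) (quot_op R g) (R``{x})"
    then show "A \<in> (\<lambda>w. R``{w}) ` orbit X f g x"
    proof (induction rule: orbit.induct)
      case orbit_base then show ?case by (auto intro: orbit.intros)
    next
      case (orbit_f y z)
      then obtain w where w: "w \<in> orbit X f g x" "y = R``{w}" by blast
      from orbit_f(2) obtain v where v: "v \<in> X" "z = R``{v}" by (auto simp: quotient_def)
      have wX: "w \<in> X" using orbit_sub[OF x] w by blast
      have "quot_op R f y z = R``{f w v}" using qop[OF wX v(1)] w v by simp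
      then show ?case using w v by (auto intro: orbit.intros)
    next
      case (orbit_g y z)
      then obtain w where w: "w \<in> orbit X f g x" "y = R``{w}" by blast
      from orbit_g(2) obtain v where v: "v \<in> X" "z = R``{v}" by (auto simp: quotient_def)
      have wX: "w \<in> X" using orbit_sub[OF x] w by blast
      have "quot_op R g y z = R``{g w v}" using qop[OF wX v(1)] w v by simp
      then show ?case using w v by (auto intro: orbit.intros)
    qed
  qed
  show "(\<lambda>w. R``{w}) ` orbit X f g x \<subseteq> orbit (X // R) (quot_op R f) (quot_op R g) (R``{x})"
  proof
    fix A assume "A \<in> (\<lambda>w. R``{w}) ` orbit X f g x"
    then obtain w where w: "w \<in> orbit X f g x" "A = R``{w}" by blast
    from w(1) have "R``{w} \<in> orbit (X // R) (quot_op R f) (quot_op R g) (R``{x})"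
    proof (induction rule: orbit.induct)
      case orbit_base then show ?case by (rule orbit.intros)
    next
      case (orbit_f y z)
      have yX: "y \<in> X" using orbit_sub[OF x] orbit_f by blast
      have "R``{z} \<in> X // R" using orbit_f by (auto simp: quotient_def)
      then show ?case using orbit_f qop[OF yX orbit_f(2)] orbit.orbit_f by metis
    next
      case (orbit_g y z)
      have yX: "y \<in> X" using orbit_sub[OF x] orbit_g by blast
      have "R``{z} \<in> X // R" using orbit_g by (auto simp: quotient_def)
      then show ?case using orbit_g qop[OF yX orbit_g(2)] orbit.orbit_g by metis
    qed
    then show "A \<in> orbit (X // R) (quot_op R f) (quot_op R g) (R``{x})" using w by simp
  qed
qed

lemma char: "effective_closure X f g R =
   {(x, y). x \<in> X \<and> y \<in> X \<and> (\<exists>w\<in>orbit X f g x. (w, y) \<in> R)}"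
proof -
  have "((\<lambda>w. R``{w}) ` orbit X f g x = (\<lambda>w. R``{w}) ` orbit X f g y) \<longleftrightarrow>
        (\<exists>w\<in>orbit X f g x. (w, y) \<in> R)" if x: "x \<in> X" and y: "y \<in> X" for x y
  proof
    assume "(\<lambda>w. R``{w}) ` orbit X f g x = (\<lambda>w. R``{w}) ` orbit X f g y"
    moreover have "R``{y} \<in> (\<lambda>w. R``{w}) ` orbit X f g y" by (auto intro: orbit.intros)
    ultimately have "R``{y} \<in> (\<lambda>w. R``{w}) ` orbit X f g x" by simp
    then obtain w where "w \<in> orbit X f g x" "R``{w} = R``{y}" by blast
    moreover have "w \<in> X" using orbit_sub[OF x] calculation by blast
    ultimately show "\<exists>w\<in>orbit X f g x. (w, y) \<in> R"
      using eq_equiv_class_iff[OF eqR] y by blast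
  next
    assume "\<exists>w\<in>orbit X f g x. (w, y) \<in> R"
    then obtain w where w: "w \<in> orbit X f g x" "(w, y) \<in> R" by blast
    have wx: "x \<in> orbit X f g w" using orbit_sym[OF w(1) x] .
    have yw: "(y, w) \<in> R" using w(2) eqR unfolding equiv_def sym_def by blast
    show "(\<lambda>w. R``{w}) ` orbit X f g x = (\<lambda>w. R``{w}) ` orbit X f g y"
    proof (rule equalityI; rule subsetI)
      fix A assume "A \<in> (\<lambda>w. R``{w}) ` orbit X f g x"
      then obtain u where u: "u \<in> orbit X f g x" "A = R``{u}" by blast
      have "u \<in> orbit X f g w" using orbit_trans[OF u(1) wx] .
      then obtain u' where "u' \<in> orbit X f g y" "(u', u) \<in> R" using L yw by blast
      then show "A \<in> (\<lambda>w. R``{w}) ` orbit X f g y" using u equiv_class_eq[OF eqR] by blast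
    next
      fix A assume "A \<in> (\<lambda>w. R``{w}) ` orbit X f g y"
      then obtain u where u: "u \<in> orbit X f g y" "A = R``{u}" by blast
      then obtain u' where "u' \<in> orbit X f g w" "(u', u) \<in> R" using L w(2) by blast
      then show "A \<in> (\<lambda>w. R``{w}) ` orbit X f g x"
        using u equiv_class_eq[OF eqR] orbit_trans[OF _ w(1)] by blast
    qed
  qed
  then have "\<And>x y. x \<in> X \<Longrightarrow> y \<in> X \<Longrightarrow>
     (orbit (X // R) (quot_op R f) (quot_op R g) (R``{x}) = orbit (X // R) (quot_op R f) (quot_op R g) (R``{y}))
      \<longleftrightarrow> (\<exists>w\<in>orbit X f g x. (w, y) \<in> R)"
    by (simp only: orbit_quot)
  then show ?thesis unfolding effective_closure_def by blast
qed

lemma P2: "R \<subseteq> effective_closure X f g R"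
  unfolding char using RX by (auto intro: orbit.intros)

lemma P4: "x \<in> X \<Longrightarrow> z \<in> X \<Longrightarrow> (x, f x z) \<in> effective_closure X f g R"
  unfolding char using cl reflR by (auto intro!: bexI[of _ "f x z"] intro: orbit.intros)

lemma P3: assumes T: "congruence X f g T" and RT: "R \<subseteq> T"
  and O: "\<And>x z. x \<in> X \<Longrightarrow> z \<in> X \<Longrightarrow> (x, f x z) \<in> T"
  shows "effective_closure X f g R \<subseteq> T"
proof
  have eT: "equiv X T" using T unfolding congruence_def by blast
  have orb: "w \<in> orbit X f g x \<Longrightarrow> x \<in> X \<Longrightarrow> (x, w) \<in> T" for x w
  proof (induction rule: orbit.induct)
    case orbit_base then show ?case using eT unfolding equiv_def refl_on_def by blast
  next
    case (orbit_f y z)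
    have "y \<in> X" using orbit_sub orbit_f by blast
    then show ?case using O[of y z] orbit_f eT unfolding equiv_def trans_def by blast
  next
    case (orbit_g y z)
    have yX: "y \<in> X" using orbit_sub orbit_g by blast
    have "(g y z, f (g y z) z) \<in> T" using O cl yX orbit_g by blast
    then have "(g y z, y) \<in> T" using inv1[OF yX orbit_g(2)] by simp
    then show ?case using orbit_g eT unfolding equiv_def trans_def sym_def by blast
  qed
  fix p assume "p \<in> effective_closure X f g R"
  then obtain x y w where "p = (x, y)" "x \<in> X" "w \<in> orbit X f g x" "(w, y) \<in> R"
    unfolding char by blast
  then show "p \<in> T" using orb RT eT unfolding equiv_def trans_def by blast
qed

lemma P1: "congruence X f g (effective_closure X f g R)"
proof -
  let ?E = "effective_closure X f g R"
  have sym: "sym ?E"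
  proof (rule symI)
    fix x y assume "(x, y) \<in> ?E"
    then obtain w where xy: "x \<in> X" "y \<in> X" "w \<in> orbit X f g x" "(w, y) \<in> R" unfolding char by blast
    have yw: "(y, w) \<in> R" using xy(4) eqR unfolding equiv_def sym_def by blast
    obtain v where "v \<in> orbit X f g y" "(v, x) \<in> R" using L[OF orbit_sym[OF xy(3) xy(1)] yw] by blast
    then show "(y, x) \<in> ?E" unfolding char using xy by blast
  qed
  have tr: "trans ?E"
  proof (rule transI)
    fix x y z assume "(x, y) \<in> ?E" "(y, z) \<in> ?E"
    then obtain w u where h: "x \<in> X" "y \<in> X" "z \<in> X" "w \<in> orbit X f g x" "(w, y) \<in> R"
      "u \<in> orbit X f g y" "(u, z) \<in> R" unfolding char by blast
    obtain u' where "u' \<in> orbit X f g w" "(u', u) \<in> R" using L[OF h(6) h(5)] by blast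
    then show "(x, z) \<in> ?E" unfolding char using h orbit_trans[OF _ h(4)] eqR
      unfolding equiv_def trans_def by blast
  qed
  have rf: "refl_on X ?E" unfolding refl_on_def char using reflR by (auto intro: orbit.intros)
  have cmp: "(f x y, f x' y') \<in> ?E \<and> (g x y, g x' y') \<in> ?E"
    if "(x, x') \<in> ?E" "(y, y') \<in> ?E" for x x' y y'
  proof -
    from that obtain w where h: "x \<in> X" "x' \<in> X" "y \<in> X" "y' \<in> X" "w \<in> orbit X f g x" "(w, x') \<in> R"
      unfolding char by blast
    have y'R: "(y', y') \<in> R" using reflR h by blast
    have wX: "w \<in> X" using orbit_sub h by blast
    have 1: "w \<in> orbit X f g (f x y)" using orbit_trans[OF h(5) orbit_f_in[OF h(1) h(3)]] .
    have 2: "w \<in> orbit X f g (g x y)" using orbit_trans[OF h(5) orbit_g_in[OF h(1) h(3)]] .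
    have "(f x y, f x' y') \<in> ?E" unfolding char using cl h compR[OF h(6) y'R]
      by (auto intro!: bexI[of _ "f w y'"] intro: orbit.intros 1)
    moreover have "(g x y, g x' y') \<in> ?E" unfolding char using cl h compR[OF h(6) y'R]
      by (auto intro!: bexI[of _ "g w y'"] intro: orbit.intros 2)
    ultimately show ?thesis by blast
  qed
  show ?thesis unfolding congruence_def equiv_def
  proof (intro conjI allI impI)
    fix x x' y y' assume "(x, x') \<in> ?E" "(y, y') \<in> ?E"
    from cmp[OF this] show "(f x y, f x' y') \<in> ?E" "(g x y, g x' y') \<in> ?E" by blast+
  qed (use rf sym tr in \<open>auto simp: refl_on_def char\<close>)
qed

end

lemma cong_univ: "congruence X f g (X \<times> X)"
  unfolding congruence_def equiv_def refl_on_def sym_def trans_def using cl by auto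

lemma Inter_cong: assumes ne: "T0 \<in> F" and all: "\<And>T. T \<in> F \<Longrightarrow> congruence X' f' g' T"
  shows "congruence X' f' g' (\<Inter>F)"
proof -
  have E: "\<And>T. T \<in> F \<Longrightarrow> equiv X' T" using all unfolding congruence_def by blast
  have sub: "\<Inter>F \<subseteq> X' \<times> X'" using E[OF ne] ne unfolding equiv_def refl_on_def by blast
  have r: "refl_on X' (\<Inter>F)" unfolding refl_on_def
  proof (intro conjI ballI sub InterI)
    fix x T assume "x \<in> X'" "T \<in> F" then show "(x, x) \<in> T"
      using E unfolding equiv_def refl_on_def by blast
  qed
  have s: "sym (\<Inter>F)"
  proof (rule symI, rule InterI)
    fix x y T assume "(x, y) \<in> \<Inter>F" "T \<in> F"
    then have "(x, y) \<in> T" "sym T" using E unfolding equiv_def by blast+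
    then show "(y, x) \<in> T" by (meson symD)
  qed
  have t: "trans (\<Inter>F)"
  proof (rule transI, rule InterI)
    fix x y z T assume "(x, y) \<in> \<Inter>F" "(y, z) \<in> \<Inter>F" "T \<in> F"
    then have "(x, y) \<in> T" "(y, z) \<in> T" "trans T" using E unfolding equiv_def by blast+
    then show "(x, z) \<in> T" by (meson transD)
  qed
  have c: "\<forall>x x' y y'. (x, x') \<in> \<Inter>F \<longrightarrow> (y, y') \<in> \<Inter>F \<longrightarrow>
        (f' x y, f' x' y') \<in> \<Inter>F \<and> (g' x y, g' x' y') \<in> \<Inter>F"
  proof (intro allI impI)
    fix x x' y y' assume a: "(x, x') \<in> \<Inter>F" and b: "(y, y') \<in> \<Inter>F"
    have "(f' x y, f' x' y') \<in> T \<and> (g' x y, g' x' y') \<in> T" if "T \<in> F" for T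
    proof -
      have "congruence X' f' g' T" "(x, x') \<in> T" "(y, y') \<in> T" using that a b all by auto
      then show ?thesis unfolding congruence_def by blast
    qed
    then show "(f' x y, f' x' y') \<in> \<Inter>F \<and> (g' x y, g' x' y') \<in> \<Inter>F" by blast
  qed
  show ?thesis unfolding congruence_def equiv_def by (intro conjI r s t c sub)
qed

lemma cong_join_cong: assumes "congruence X f g A" "congruence X f g B"
  shows "congruence X f g (cong_join X f g A B)"
proof -
  have "A \<union> B \<subseteq> X \<times> X" using assms unfolding congruence_def equiv_def refl_on_def by blast
  then have "X \<times> X \<in> {T. congruence X f g T \<and> A \<union> B \<subseteq> T}" using cong_univ by blast
  then show ?thesis unfolding cong_join_def by (rule Inter_cong) blast
qed

end

lemma cong_join_upper: "A \<union> B \<subseteq> cong_join X f g A B"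
  unfolding cong_join_def by blast

lemma cong_join_least: "congruence X f g T \<Longrightarrow> A \<union> B \<subseteq> T \<Longrightarrow> cong_join X f g A B \<subseteq> T"
  unfolding cong_join_def by blast

lemma Un_least_left_helper: "A \<union> B \<subseteq> C \<Longrightarrow> A \<subseteq> C" by blast
lemma Un_least_right_helper: "A \<union> B \<subseteq> C \<Longrightarrow> B \<subseteq> C" by blast

theorem mainTheorem12:
  assumes "quandle X f g"
    and "congruence X f g R"
    and "congruence X f g S"
  shows "effective_closure X f g (cong_join X f g R S) =
         cong_join X f g (effective_closure X f g R) (effective_closure X f g S)"
proof -
  note Q = assms(1)
  let ?J = "cong_join X f g R S"
  let ?K = "cong_join X f g (effective_closure X f g R) (effective_closure X f g S)"
  have J: "congruence X f g ?J" using cong_join_cong[OF Q assms(2,3)] .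
  have K: "congruence X f g ?K" using cong_join_cong[OF Q P1[OF Q assms(2)] P1[OF Q assms(3)]] .
  have ERK: "effective_closure X f g R \<subseteq> ?K" using cong_join_upper[of "effective_closure X f g R"] by (rule Un_least_left_helper)
  have ESK: "effective_closure X f g S \<subseteq> ?K" using cong_join_upper[of "effective_closure X f g R"] by (rule Un_least_right_helper)
  have "R \<union> S \<subseteq> ?K" using P2[OF Q assms(2)] P2[OF Q assms(3)] ERK ESK by blast
  then have JK: "?J \<subseteq> ?K" by (rule cong_join_least[OF K])
  have OK: "\<And>x z. x \<in> X \<Longrightarrow> z \<in> X \<Longrightarrow> (x, f x z) \<in> ?K"
  proof -
    fix x z assume "x \<in> X" "z \<in> X"
    then have "(x, f x z) \<in> effective_closure X f g R" by (rule P4[OF Q assms(2)])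
    then show "(x, f x z) \<in> ?K" using ERK by (rule subsetD[rotated])
  qed
  have 1: "effective_closure X f g ?J \<subseteq> ?K" using P3[OF Q J K JK OK] .
  have RJ: "R \<subseteq> ?J" using cong_join_upper[of R S] by (rule Un_least_left_helper)
  have SJ: "S \<subseteq> ?J" using cong_join_upper[of R S] by (rule Un_least_right_helper)
  have OJ: "\<And>x z. x \<in> X \<Longrightarrow> z \<in> X \<Longrightarrow> (x, f x z) \<in> effective_closure X f g ?J"
    using P4[OF Q J] .
  have EJ: "?J \<subseteq> effective_closure X f g ?J" by (rule P2[OF Q J])
  have RE: "R \<subseteq> effective_closure X f g ?J" using RJ EJ by (rule order_trans)
  have SE: "S \<subseteq> effective_closure X f g ?J" using SJ EJ by (rule order_trans)
  have a: "effective_closure X f g R \<subseteq> effective_closure X f g ?J"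
    by (rule P3[OF Q assms(2) P1[OF Q J] RE OJ])
  have b: "effective_closure X f g S \<subseteq> effective_closure X f g ?J"
    by (rule P3[OF Q assms(3) P1[OF Q J] SE OJ])
  have "effective_closure X f g R \<union> effective_closure X f g S \<subseteq> effective_closure X f g ?J"
    using a b by (rule Un_least)
  then have 2: "?K \<subseteq> effective_closure X f g ?J"
    by (rule cong_join_least[OF P1[OF Q J]])
  show ?thesis using 1 2 by blast
qed

end
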